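(* The images of the forkless monomials $\mathfrak{m}\in\mathfrak{M}$ under the projection $\mathcal{X}\to\mathcal{X}/\mathcal{J}$ form a basis of the $\mathbf{k}$-module $\mathcal{X}/\mathcal{J}$.
   Context: Let $\mathbf{k}$ be a commutative ring, let $\beta,\alpha\in\mathbf{k}$, and let $n$ be a positive integer. Let $\mathcal{X}=\mathbf{k}[x_{i,j}\mid 1\le i<j\le n]$ be the polynomial ring over $\mathbf{k}$ in the indeterminates $x_{i,j}$, and $\mathfrak{M}$ the set of monomials in them. Let $\mathcal{J}$ be the ideal of $\mathcal{X}$ generated by all elements $x_{i,j}x_{j,k}-x_{i,k}(x_{i,j}+x_{j,k}+\beta)-\alpha$ for $1\le i<j<k\le n$. A monomial $\mathfrak{m}\in\mathfrak{M}$ is forkless if there is no triple $1\le i<j<k\le n$ with $x_{i,j}x_{i,k}\mid\mathfrak{m}$. *)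

theory Defs
  imports Main "HOL-Library.Poly_Mapping"
begin

text \<open>The ring X of the paper is the
  subring of polynomials involving only the variables x_(i,j) with 1 <= i < j <= n.\<close>

type_synonym monom = "(nat \<times> nat) \<Rightarrow>\<^sub>0 nat"
type_synonym 'k mpoly = "monom \<Rightarrow>\<^sub>0 'k"

definition valid_var :: "nat \<Rightarrow> nat \<times> nat \<Rightarrow> bool" where
  "valid_var n v \<longleftrightarrow> 1 \<le> fst v \<and> fst v < snd v \<and> snd v \<le> n"

definition monomials :: "nat \<Rightarrow> monom set" where
  "monomials n = {m. \<forall>v\<in>Poly_Mapping.keys m. valid_var n v}"

definition Xring :: "nat \<Rightarrow> ('k::comm_ring_1) mpoly set" where
  "Xring n = {p. \<forall>m\<in>Poly_Mapping.keys p. m \<in> monomials n}"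

definition var :: "nat \<times> nat \<Rightarrow> ('k::comm_ring_1) mpoly" where
  "var v = Poly_Mapping.single (Poly_Mapping.single v 1) 1"

definition const :: "'k::comm_ring_1 \<Rightarrow> 'k mpoly" where
  "const c = Poly_Mapping.single 0 c"

definition gen_elt :: "'k::comm_ring_1 \<Rightarrow> 'k \<Rightarrow> nat \<Rightarrow> nat \<Rightarrow> nat \<Rightarrow> 'k mpoly" where
  "gen_elt \<beta> \<alpha> i j k =
     var (i,j) * var (j,k) - var (i,k) * (var (i,j) + var (j,k) + const \<beta>) - const \<alpha>"

definition Jgens :: "nat \<Rightarrow> 'k::comm_ring_1 \<Rightarrow> 'k \<Rightarrow> 'k mpoly set" where
  "Jgens n \<beta> \<alpha> = {gen_elt \<beta> \<alpha> i j k | i j k. 1 \<le> i \<and> i < j \<and> j < k \<and> k \<le> n}"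

inductive_set ideal_in :: "('a::comm_ring_1) set \<Rightarrow> 'a set \<Rightarrow> 'a set"
  for X :: "'a set" and G :: "'a set" where
  zero: "0 \<in> ideal_in X G"
| step: "p \<in> ideal_in X G \<Longrightarrow> q \<in> X \<Longrightarrow> g \<in> G \<Longrightarrow> p + q * g \<in> ideal_in X G"

definition Jideal :: "nat \<Rightarrow> 'k::comm_ring_1 \<Rightarrow> 'k \<Rightarrow> 'k mpoly set" where
  "Jideal n \<beta> \<alpha> = ideal_in (Xring n) (Jgens n \<beta> \<alpha>)"

definition forkless :: "nat \<Rightarrow> monom \<Rightarrow> bool" where
  "forkless n m \<longleftrightarrow> m \<in> monomials n \<and>
     \<not> (\<exists>i j k. 1 \<le> i \<and> i < j \<and> j < k \<and> k \<le> n \<and>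
            Poly_Mapping.lookup m (i,j) \<noteq> 0 \<and> Poly_Mapping.lookup m (i,k) \<noteq> 0)"

end

theory Submission
  imports Defs "HOL-Library.Product_Lexorder"
begin

abbreviation lk :: "('a \<Rightarrow>\<^sub>0 'b::zero) \<Rightarrow> 'a \<Rightarrow> 'b" where "lk \<equiv> Poly_Mapping.lookup"

abbreviation e :: "nat \<times> nat \<Rightarrow> monom" where "e v \<equiv> Poly_Mapping.single v 1"

definition fk :: "nat \<Rightarrow> nat \<Rightarrow> nat \<Rightarrow> monom" where
  "fk i j k = e (i,j) + e (i,k)"

definition tri :: "nat \<Rightarrow> nat \<Rightarrow> nat \<Rightarrow> nat \<Rightarrow> bool" where
  "tri n i j k \<longleftrightarrow> 1 \<le> i \<and> i < j \<and> j < k \<and> k \<le> n"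

lemma less_monI:
  fixes m1 m2 :: monom
  assumes "lk m1 v < lk m2 v" "\<And>w. w < v \<Longrightarrow> lk m1 w = lk m2 w"
  shows "m1 < m2"
  using assms unfolding less_poly_mapping.rep_eq less_fun_def by blast

lemma lookup_single_when: "lk (Poly_Mapping.single k v) k' = (if k = k' then v else 0)"
  by (simp add: lookup_single when_def)

lemma mon_A: "i < j \<Longrightarrow> j < k \<Longrightarrow> e (i,j) + e (j,k) < fk i j k"
  unfolding fk_def
  by (rule less_monI[where v="(i,k)"]) (auto simp: lookup_add lookup_single_when)

lemma mon_B: "i < j \<Longrightarrow> j < k \<Longrightarrow> e (i,k) + e (j,k) < fk i j k"
  unfolding fk_def
  by (rule less_monI[where v="(i,j)"]) (auto simp: lookup_add lookup_single_when)

lemma mon_C: "i < j \<Longrightarrow> j < k \<Longrightarrow> e (i,k) < fk i j k"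
  unfolding fk_def
  by (rule less_monI[where v="(i,j)"]) (auto simp: lookup_add lookup_single_when)

lemma mon_0: "i < j \<Longrightarrow> j < k \<Longrightarrow> 0 < fk i j k"
  unfolding fk_def
  by (rule less_monI[where v="(i,j)"]) (auto simp: lookup_add lookup_single_when)

lemma var_mult: "var a * var b = (Poly_Mapping.single (e a + e b) 1 :: 'k::comm_ring_1 mpoly)"
  by (simp add: var_def mult_single)

lemma gen_expand:
  "gen_elt \<beta> \<alpha> i j k = Poly_Mapping.single (e (i,j) + e (j,k)) 1 - Poly_Mapping.single (fk i j k) 1
     - Poly_Mapping.single (e (i,k) + e (j,k)) 1 - Poly_Mapping.single (e (i,k)) \<beta> - Poly_Mapping.single 0 \<alpha>"
  unfolding gen_elt_def fk_def
  by (simp add: var_def const_def mult_single algebra_simps add.commute)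

lemma monomials_add: "a \<in> monomials n \<Longrightarrow> b \<in> monomials n \<Longrightarrow> a + b \<in> monomials n"
  unfolding monomials_def using keys_add[of a b] by (auto dest!: subsetD)

lemma monomials_e: "valid_var n v \<Longrightarrow> Poly_Mapping.single v k \<in> monomials n"
  unfolding monomials_def by simp

lemma monomials_0: "0 \<in> monomials n"
  unfolding monomials_def by simp

lemma monomials_diff: "a \<in> monomials n \<Longrightarrow> a - b \<in> monomials n"
  unfolding monomials_def by (auto simp: in_keys_iff lookup_minus)

lemma tri_valid:
  assumes "tri n i j k"
  shows "valid_var n (i,j)" "valid_var n (i,k)" "valid_var n (j,k)"
  using assms unfolding tri_def valid_var_def by auto

lemma tri_mons:
  assumes "tri n i j k"
  shows "fk i j k \<in> monomials n" "e (i,j) + e (j,k) \<in> monomials n"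
    "e (i,k) + e (j,k) \<in> monomials n" "e (i,k) \<in> monomials n"
  using tri_valid[OF assms] unfolding fk_def
  by (auto intro!: monomials_add monomials_e)

lemma Xring_single: "u \<in> monomials n \<Longrightarrow> Poly_Mapping.single u c \<in> Xring n"
  unfolding Xring_def by simp

lemma Xring_add: "p \<in> Xring n \<Longrightarrow> q \<in> Xring n \<Longrightarrow> p + q \<in> Xring n"
  unfolding Xring_def using keys_add[of p q] by (auto dest!: subsetD)

lemma Xring_uminus: "p \<in> Xring n \<Longrightarrow> - p \<in> Xring n"
  unfolding Xring_def by simp

lemma Xring_mult: assumes "p \<in> Xring n" "q \<in> Xring n" shows "p * q \<in> Xring n"
proof -
  have "m \<in> monomials n" if mk: "m \<in> Poly_Mapping.keys (p * q)" for m
  proof -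
    obtain a b where "m = a + b" "a \<in> Poly_Mapping.keys p" "b \<in> Poly_Mapping.keys q" using keys_mult[of p q] mk by blast
    then show ?thesis using assms monomials_add unfolding Xring_def by blast
  qed
  then show ?thesis unfolding Xring_def by blast
qed

lemma poly_expand: "p = (\<Sum>m\<in>Poly_Mapping.keys p. Poly_Mapping.single m (lk p m))"
proof -
  have *: "finite I \<Longrightarrow> lk (\<Sum>m\<in>I. Poly_Mapping.single m (lk p m)) x = (if x \<in> I then lk p x else 0)" for I x
    by (induction I rule: finite_induct) (auto simp: lookup_single when_def lookup_add)
  show ?thesis
    by (rule poly_mapping_eqI) (auto simp: * in_keys_iff)
qed

subsection \<open>Restricted spans\<close>

inductive_set Sb :: "nat \<Rightarrow> 'k \<Rightarrow> 'k \<Rightarrow> (monom \<Rightarrow> bool) \<Rightarrow> 'k::comm_ring_1 mpoly set"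
  for n \<beta> \<alpha> P where
  Sb0: "0 \<in> Sb n \<beta> \<alpha> P"
| SbS: "p \<in> Sb n \<beta> \<alpha> P \<Longrightarrow> u \<in> monomials n \<Longrightarrow> tri n i j k \<Longrightarrow> P (u + fk i j k)
     \<Longrightarrow> p + Poly_Mapping.single u c * gen_elt \<beta> \<alpha> i j k \<in> Sb n \<beta> \<alpha> P"

lemma Sb_term: "u \<in> monomials n \<Longrightarrow> tri n i j k \<Longrightarrow> P (u + fk i j k)
     \<Longrightarrow> Poly_Mapping.single u c * gen_elt \<beta> \<alpha> i j k \<in> Sb n \<beta> \<alpha> P"
  using SbS[OF Sb0] by fastforce

lemma Sb_add: assumes "p \<in> Sb n \<beta> \<alpha> P" "q \<in> Sb n \<beta> \<alpha> P" shows "p + q \<in> Sb n \<beta> \<alpha> P"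
  using assms(2)
proof (induction q rule: Sb.induct)
  case Sb0 then show ?case using assms(1) by simp
next
  case (SbS q u i j k c)
  then show ?case using Sb.SbS[of "p + q"] by (simp add: add.assoc)
qed

lemma Sb_uminus: "p \<in> Sb n \<beta> \<alpha> P \<Longrightarrow> - p \<in> Sb n \<beta> \<alpha> P"
proof (induction p rule: Sb.induct)
  case Sb0 then show ?case by (simp add: Sb.Sb0)
next
  case (SbS q u i j k c)
  have "- (q + Poly_Mapping.single u c * gen_elt \<beta> \<alpha> i j k) = - q + Poly_Mapping.single u (- c) * gen_elt \<beta> \<alpha> i j k"
    by (simp add: single_uminus)
  then show ?case using Sb.SbS[OF SbS.IH SbS.hyps(2-4)] by metis
qed

lemma Sb_diff: "p \<in> Sb n \<beta> \<alpha> P \<Longrightarrow> q \<in> Sb n \<beta> \<alpha> P \<Longrightarrow> p - q \<in> Sb n \<beta> \<alpha> P"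
  using Sb_add[OF _ Sb_uminus] by (metis diff_conv_add_uminus)

lemma Sb_mono: "p \<in> Sb n \<beta> \<alpha> P \<Longrightarrow> (\<And>x. P x \<Longrightarrow> Q x) \<Longrightarrow> p \<in> Sb n \<beta> \<alpha> Q"
  by (induction p rule: Sb.induct) (simp_all add: Sb.Sb0 Sb.SbS)

lemma Sb_mult: "p \<in> Sb n \<beta> \<alpha> P \<Longrightarrow> w \<in> monomials n \<Longrightarrow> (\<And>x. P x \<Longrightarrow> Q (w + x))
   \<Longrightarrow> Poly_Mapping.single w d * p \<in> Sb n \<beta> \<alpha> Q"
proof (induction p rule: Sb.induct)
  case Sb0 then show ?case by (simp add: Sb.Sb0)
next
  case (SbS q u i j k c)
  have "Poly_Mapping.single w d * (q + Poly_Mapping.single u c * gen_elt \<beta> \<alpha> i j k)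
      = Poly_Mapping.single w d * q + Poly_Mapping.single (w + u) (d * c) * gen_elt \<beta> \<alpha> i j k"
    by (simp add: distrib_left mult_single mult.assoc[symmetric])
  moreover have "Q ((w + u) + fk i j k)" using SbS by (simp add: add.assoc)
  ultimately show ?case
    using Sb.SbS[OF SbS.IH[OF SbS.prems] monomials_add[OF SbS.prems(1) SbS.hyps(2)] SbS.hyps(3)] by metis
qed

lemma Sb_polyG:
  assumes "q \<in> Xring n" "tri n i j k" "\<And>m. m \<in> Poly_Mapping.keys q \<Longrightarrow> P (m + fk i j k)"
  shows "q * gen_elt \<beta> \<alpha> i j k \<in> Sb n \<beta> \<alpha> P"
proof -
  have "finite S \<Longrightarrow> S \<subseteq> Poly_Mapping.keys q \<Longrightarrow> (\<Sum>m\<in>S. Poly_Mapping.single m (lk q m) * gen_elt \<beta> \<alpha> i j k) \<in> Sb n \<beta> \<alpha> P" for S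
  proof (induction S rule: finite_induct)
    case empty then show ?case by (simp add: Sb.Sb0)
  next
    case (insert x F)
    have "x \<in> monomials n" using insert(4) assms(1) unfolding Xring_def by blast
    then have "Poly_Mapping.single x (lk q x) * gen_elt \<beta> \<alpha> i j k \<in> Sb n \<beta> \<alpha> P"
      using insert(4) assms(2,3) by (intro Sb_term) simp_all
    moreover have "(\<Sum>m\<in>F. Poly_Mapping.single m (lk q m) * gen_elt \<beta> \<alpha> i j k) \<in> Sb n \<beta> \<alpha> P"
      using insert(3,4) by simp
    ultimately show ?case unfolding sum.insert[OF insert(1,2)] by (rule Sb_add)
  qed
  then have "(\<Sum>m\<in>Poly_Mapping.keys q. Poly_Mapping.single m (lk q m) * gen_elt \<beta> \<alpha> i j k) \<in> Sb n \<beta> \<alpha> P"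
    by (simp only: finite_keys order_refl)
  moreover have "q * gen_elt \<beta> \<alpha> i j k = (\<Sum>m\<in>Poly_Mapping.keys q. Poly_Mapping.single m (lk q m) * gen_elt \<beta> \<alpha> i j k)"
    unfolding sum_distrib_right[symmetric] by (rule arg_cong[where f="\<lambda>x. x * gen_elt \<beta> \<alpha> i j k", OF poly_expand])
  ultimately show ?thesis by (simp only:)
qed

lemma monG: "Poly_Mapping.single u c * gen_elt \<beta> \<alpha> i j k =
   Poly_Mapping.single (u + (e (i,j) + e (j,k))) c - Poly_Mapping.single (u + fk i j k) c
   - Poly_Mapping.single (u + (e (i,k) + e (j,k))) c - Poly_Mapping.single (u + e (i,k)) (c * \<beta>)
   - Poly_Mapping.single u (c * \<alpha>)"
  by (simp add: gen_expand right_diff_distrib mult_single)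

lemma keys_diff5: "Poly_Mapping.keys (a - b - c - d - f) \<subseteq>
   Poly_Mapping.keys a \<union> Poly_Mapping.keys b \<union> Poly_Mapping.keys c \<union> Poly_Mapping.keys d \<union> Poly_Mapping.keys (f::'a \<Rightarrow>\<^sub>0 'b::ab_group_add)"
  using keys_diff[of "a-b-c-d" f] keys_diff[of "a-b-c" d] keys_diff[of "a-b" c] keys_diff[of a b] by blast

lemma keys_single_sub: "Poly_Mapping.keys (Poly_Mapping.single a c) \<subseteq> {a}"
  by simp

lemma fk_lt:
  assumes "i < j" "j < k"
  shows "u + (e (i,j) + e (j,k)) < u + fk i j k" "u + (e (i,k) + e (j,k)) < u + fk i j k"
     "u + e (i,k) < u + fk i j k" "u < u + fk i j k"
  using add_strict_left_mono[OF mon_A[OF assms]] add_strict_left_mono[OF mon_B[OF assms]]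
    add_strict_left_mono[OF mon_C[OF assms]] add_strict_left_mono[OF mon_0[OF assms]]
  by simp_all

lemma keysG:
  assumes "i < j" "j < k" "x \<in> Poly_Mapping.keys (Poly_Mapping.single u c * gen_elt \<beta> \<alpha> i j k)"
  shows "x \<le> u + fk i j k"
proof -
  have "x \<in> {u + (e (i,j) + e (j,k)), u + fk i j k, u + (e (i,k) + e (j,k)), u + e (i,k), u}"
    using subsetD[OF keys_diff5 assms(3)[unfolded monG]] by (auto split: if_splits)
  then show ?thesis using fk_lt[OF assms(1,2), of u] by auto
qed

lemma lookupG:
  assumes "i < j" "j < k"
  shows "lk (Poly_Mapping.single u c * gen_elt \<beta> \<alpha> i j k) (u + fk i j k) = - c"
proof -
  have "u + (e (i,j) + e (j,k)) \<noteq> u + fk i j k" "u + (e (i,k) + e (j,k)) \<noteq> u + fk i j k"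
     "u + e (i,k) \<noteq> u + fk i j k" "u + 0 \<noteq> u + fk i j k"
    using fk_lt[OF assms(1,2), of u] by auto
  then show ?thesis unfolding monG by (simp add: lookup_minus lookup_single when_def)
qed

lemma Sb_lt_lookup: "p \<in> Sb n \<beta> \<alpha> (\<lambda>x. x < M) \<Longrightarrow> lk p M = 0"
proof (induction p rule: Sb.induct)
  case Sb0 then show ?case by simp
next
  case (SbS q u i j k c)
  have "M \<notin> Poly_Mapping.keys (Poly_Mapping.single u c * gen_elt \<beta> \<alpha> i j k)"
    using keysG[of i j k _ u c \<beta> \<alpha>] SbS.hyps(3,4) unfolding tri_def by fastforce
  then show ?case using SbS.IH by (simp add: lookup_add in_keys_iff)
qed

lemma Sb_False: "p \<in> Sb n \<beta> \<alpha> (\<lambda>x. False) \<Longrightarrow> p = 0"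
  by (induction p rule: Sb.induct) simp_all

lemma fk_mono_mon: "u \<in> monomials n \<Longrightarrow> tri n i j k \<Longrightarrow> u + fk i j k \<in> monomials n"
  using monomials_add tri_mons(1) by blast

lemma Sb_bound: "p \<in> Sb n \<beta> \<alpha> P \<Longrightarrow>
   p \<in> Sb n \<beta> \<alpha> (\<lambda>x. False) \<or> (\<exists>M\<in>monomials n. P M \<and> p \<in> Sb n \<beta> \<alpha> (\<lambda>x. x \<le> M))"
proof (induction p rule: Sb.induct)
  case Sb0 then show ?case by (simp add: Sb.Sb0)
next
  case (SbS q u i j k c)
  define N where "N = u + fk i j k"
  have N: "N \<in> monomials n" unfolding N_def using SbS fk_mono_mon by blast
  show ?case
  proof (cases "q \<in> Sb n \<beta> \<alpha> (\<lambda>x. False)")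
    case True
    then have "q \<in> Sb n \<beta> \<alpha> (\<lambda>x. x \<le> N)" by (rule Sb_mono) simp
    then have "q + Poly_Mapping.single u c * gen_elt \<beta> \<alpha> i j k \<in> Sb n \<beta> \<alpha> (\<lambda>x. x \<le> N)"
      using SbS.hyps(2,3) unfolding N_def by (intro Sb.SbS) simp_all
    then show ?thesis using N SbS.hyps(4) unfolding N_def by blast
  next
    case False
    then obtain M where M: "M \<in> monomials n" "P M" "q \<in> Sb n \<beta> \<alpha> (\<lambda>x. x \<le> M)" using SbS.IH by blast
    define M' where "M' = max M N"
    have "q \<in> Sb n \<beta> \<alpha> (\<lambda>x. x \<le> M')" using M(3) by (rule Sb_mono) (simp add: M'_def le_max_iff_disj)
    then have "q + Poly_Mapping.single u c * gen_elt \<beta> \<alpha> i j k \<in> Sb n \<beta> \<alpha> (\<lambda>x. x \<le> M')"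
      using SbS.hyps(2,3) unfolding M'_def N_def by (intro Sb.SbS) simp_all
    moreover have "M' \<in> monomials n" "P M'" using M N SbS.hyps(4) unfolding M'_def N_def max_def by auto
    ultimately show ?thesis by blast
  qed
qed

lemma lex_map:
  fixes f g :: "nat \<times> nat \<Rightarrow> nat"
  assumes "sorted_wrt (<) xs" "v \<in> set xs" "f v < g v" "\<And>w. w < v \<Longrightarrow> f w = g w"
  shows "(map f xs, map g xs) \<in> lex less_than"
  using assms(1,2)
proof (induction xs)
  case Nil then show ?case by simp
next
  case (Cons x xs)
  show ?case
  proof (cases "x = v")
    case True
    then show ?thesis using assms(3) by simp
  next
    case False
    then have "v \<in> set xs" using Cons.prems by simp
    then have "x < v" using Cons.prems(1) by simp
    then have "f x = g x" by (rule assms(4))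
    moreover have "(map f xs, map g xs) \<in> lex less_than"
      using Cons.IH Cons.prems(1) \<open>v \<in> set xs\<close> by simp
    ultimately show ?thesis by simp
  qed
qed

lemma wf_mon: "wf {(x, y). x < y \<and> x \<in> monomials n \<and> y \<in> monomials n}"
proof -
  have fin: "finite {v. valid_var n v}"
    by (rule finite_subset[of _ "{0..n} \<times> {0..n}"]) (auto simp: valid_var_def)
  obtain xs where xs: "sorted_wrt (<) xs" "set xs = {v. valid_var n v}"
    using ex1_sorted_list_for_set_if_finite[OF fin] by blast
  have "{(x, y). x < y \<and> x \<in> monomials n \<and> y \<in> monomials n}
      \<subseteq> inv_image (lex less_than) (\<lambda>m. map (lk m) xs)"
  proof (clarsimp)
    fix x y :: monom
    assume a: "x < y" "x \<in> monomials n" "y \<in> monomials n"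
    then obtain v where v: "lk x v < lk y v" "\<And>w. w < v \<Longrightarrow> lk x w = lk y w"
      unfolding less_poly_mapping.rep_eq less_fun_def by blast
    then have "v \<in> Poly_Mapping.keys y" by (simp add: in_keys_iff)
    then have "v \<in> set xs" using a(3) xs(2) unfolding monomials_def by blast
    then show "(map (lk x) xs, map (lk y) xs) \<in> lex less_than"
      using lex_map[of xs v "lk x" "lk y", OF xs(1) _ v(1)] v(2) by blast
  qed
  then show ?thesis by (rule wf_subset[rotated]) (intro wf_inv_image wf_lex wf_less_than)
qed

subsection \<open>Overlap identities\<close>

lemma id1_abs:
  fixes ia ib ic ab ac bc be al :: "'a::comm_ring_1"
  shows "ic * (ia * ab - ib * (ia + ab + be) - al) - ib * (ia * ac - ic * (ia + ac + be) - al)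
   = ac * (ia * ab - ib * (ia + ab + be) - al) - ab * (ia * ac - ic * (ia + ac + be) - al)
   + ab * (ib * bc - ic * (ib + bc + be) - al) - ac * (ib * bc - ic * (ib + bc + be) - al)
   - ib * (ab * bc - ac * (ab + bc + be) - al) + ic * (ab * bc - ac * (ab + bc + be) - al)"
  by (simp add: algebra_simps)

lemma id2_abs:
  fixes ia ib ic ab ac bc be al :: "'a::comm_ring_1"
  shows "ic * (ia * ab - ib * (ia + ab + be) - al) - ia * (ib * bc - ic * (ib + bc + be) - al)
   = bc * (ia * ab - ib * (ia + ab + be) - al) - ab * (ia * ac - ic * (ia + ac + be) - al)
   - bc * (ia * ac - ic * (ia + ac + be) - al) - be * (ia * ac - ic * (ia + ac + be) - al)
   - ia * (ab * bc - ac * (ab + bc + be) - al) + ab * (ib * bc - ic * (ib + bc + be) - al)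
   + be * (ib * bc - ic * (ib + bc + be) - al) + ic * (ab * bc - ac * (ab + bc + be) - al)"
  by (simp add: algebra_simps)

lemma ov_core:
  fixes \<beta> \<alpha> :: "'k::comm_ring_1"
  assumes "1 \<le> i" "i < a" "a < b" "b < c" "c \<le> n"
  defines "T \<equiv> e (i,a) + e (i,b) + e (i,c)"
  shows "Poly_Mapping.single (e (i,c)) 1 * gen_elt \<beta> \<alpha> i a b - Poly_Mapping.single (e (i,b)) 1 * gen_elt \<beta> \<alpha> i a c
           \<in> Sb n \<beta> \<alpha> (\<lambda>x. x < T)" (is ?A)
    and "Poly_Mapping.single (e (i,c)) 1 * gen_elt \<beta> \<alpha> i a b - Poly_Mapping.single (e (i,a)) 1 * gen_elt \<beta> \<alpha> i b c
           \<in> Sb n \<beta> \<alpha> (\<lambda>x. x < T)" (is ?B)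
proof -
  have t: "tri n i a b" "tri n i a c" "tri n i b c" "tri n a b c" using assms unfolding tri_def by auto
  have m: "e (i,a) \<in> monomials n" "e (i,b) \<in> monomials n" "e (i,c) \<in> monomials n"
     "e (a,b) \<in> monomials n" "e (a,c) \<in> monomials n" "e (b,c) \<in> monomials n" "(0::monom) \<in> monomials n"
    using assms by (auto intro!: monomials_e monomials_0 simp: valid_var_def)
  have o0: "e (a,c) + fk i a b < T" by (unfold T_def fk_def, rule less_monI[where v="(i,c)"]) (use assms in \<open>auto simp: lookup_add lookup_single_when\<close>)
  have o1: "e (a,b) + fk i a c < T" by (unfold T_def fk_def, rule less_monI[where v="(i,b)"]) (use assms in \<open>auto simp: lookup_add lookup_single_when\<close>)
  have o2: "e (a,b) + fk i b c < T" by (unfold T_def fk_def, rule less_monI[where v="(i,a)"]) (use assms in \<open>auto simp: lookup_add lookup_single_when\<close>)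
  have o3: "e (a,c) + fk i b c < T" by (unfold T_def fk_def, rule less_monI[where v="(i,a)"]) (use assms in \<open>auto simp: lookup_add lookup_single_when\<close>)
  have o4: "e (i,b) + fk a b c < T" by (unfold T_def fk_def, rule less_monI[where v="(i,a)"]) (use assms in \<open>auto simp: lookup_add lookup_single_when\<close>)
  have o5: "e (i,c) + fk a b c < T" by (unfold T_def fk_def, rule less_monI[where v="(i,a)"]) (use assms in \<open>auto simp: lookup_add lookup_single_when\<close>)
  have o6: "e (b,c) + fk i a b < T" by (unfold T_def fk_def, rule less_monI[where v="(i,c)"]) (use assms in \<open>auto simp: lookup_add lookup_single_when\<close>)
  have o7: "e (b,c) + fk i a c < T" by (unfold T_def fk_def, rule less_monI[where v="(i,b)"]) (use assms in \<open>auto simp: lookup_add lookup_single_when\<close>)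
  have o8: "0 + fk i a c < T" by (unfold T_def fk_def, rule less_monI[where v="(i,b)"]) (use assms in \<open>auto simp: lookup_add lookup_single_when\<close>)
  have o9: "e (i,a) + fk a b c < T" by (unfold T_def fk_def, rule less_monI[where v="(i,b)"]) (use assms in \<open>auto simp: lookup_add lookup_single_when\<close>)
  have o10: "0 + fk i b c < T" by (unfold T_def fk_def, rule less_monI[where v="(i,a)"]) (use assms in \<open>auto simp: lookup_add lookup_single_when\<close>)
  let ?G = "gen_elt \<beta> \<alpha>"
  have eq1: "Poly_Mapping.single (e (i,c)) 1 * ?G i a b - Poly_Mapping.single (e (i,b)) 1 * ?G i a c
     = Poly_Mapping.single (e (a,c)) 1 * ?G i a b - Poly_Mapping.single (e (a,b)) 1 * ?G i a c
     + Poly_Mapping.single (e (a,b)) 1 * ?G i b c - Poly_Mapping.single (e (a,c)) 1 * ?G i b c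
     - Poly_Mapping.single (e (i,b)) 1 * ?G a b c + Poly_Mapping.single (e (i,c)) 1 * ?G a b c"
    unfolding gen_elt_def var_def[symmetric] by (rule id1_abs)
  have eq2: "Poly_Mapping.single (e (i,c)) 1 * ?G i a b - Poly_Mapping.single (e (i,a)) 1 * ?G i b c
     = Poly_Mapping.single (e (b,c)) 1 * ?G i a b - Poly_Mapping.single (e (a,b)) 1 * ?G i a c
     - Poly_Mapping.single (e (b,c)) 1 * ?G i a c - Poly_Mapping.single 0 \<beta> * ?G i a c
     - Poly_Mapping.single (e (i,a)) 1 * ?G a b c + Poly_Mapping.single (e (a,b)) 1 * ?G i b c
     + Poly_Mapping.single 0 \<beta> * ?G i b c + Poly_Mapping.single (e (i,c)) 1 * ?G a b c"
    unfolding gen_elt_def var_def[symmetric] const_def[symmetric] by (rule id2_abs)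
  show ?A unfolding eq1
    by (intro Sb_add Sb_diff Sb_term; (rule t m o0 o1 o2 o3 o4 o5 o6 o7 o8 o9 o10)?)
  show ?B unfolding eq2
    by (intro Sb_add Sb_diff Sb_term; (rule t m o0 o1 o2 o3 o4 o5 o6 o7 o8 o9 o10)?)
qed

lemma le_split: "(\<And>v. lk a v \<le> lk (M::monom) v) \<Longrightarrow> M = (M - a) + a"
  by (rule poly_mapping_eqI) (simp add: lookup_add lookup_minus)

lemma lk_fk: "lk (u + fk i j k) (i,j) \<ge> 1" "lk (u + fk i j k) (i,k) \<ge> 1"
  by (auto simp: fk_def lookup_add lookup_single_when)

lemma overlap:
  fixes \<beta> \<alpha> :: "'k::comm_ring_1"
  assumes "1 \<le> i" "i < a" "a < b" "b < c" "c \<le> n" "u \<in> monomials n" "u' \<in> monomials n"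
    "(j,k) \<in> {(a,b),(a,c),(b,c)}" "(j',k') \<in> {(a,b),(a,c),(b,c)}" "(j,k) \<noteq> (j',k')"
    "u + fk i j k = M" "u' + fk i j' k' = M"
  shows "Poly_Mapping.single u 1 * gen_elt \<beta> \<alpha> i j k - Poly_Mapping.single u' 1 * gen_elt \<beta> \<alpha> i j' k'
     \<in> Sb n \<beta> \<alpha> (\<lambda>x. x < M)"
proof -
  define T where "T = e (i,a) + e (i,b) + e (i,c)"
  define th where "th j k = a + b + c - j - k" for j k :: nat
  define D where "D j k = Poly_Mapping.single (e (i, th j k)) 1 * gen_elt \<beta> \<alpha> i j k" for j k
  have thv: "th a b = c" "th a c = b" "th b c = a" unfolding th_def using assms by auto
  have h1: "D a b - D a c \<in> Sb n \<beta> \<alpha> (\<lambda>x. x < T)" unfolding D_def thv T_def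
    using ov_core(1)[OF assms(1-5)] .
  have h2: "D a b - D b c \<in> Sb n \<beta> \<alpha> (\<lambda>x. x < T)" unfolding D_def thv T_def
    using ov_core(2)[OF assms(1-5)] .
  have h3: "D a c - D b c \<in> Sb n \<beta> \<alpha> (\<lambda>x. x < T)"
    using Sb_diff[OF h2 h1] by (simp add: algebra_simps)
  have h1': "D a c - D a b \<in> Sb n \<beta> \<alpha> (\<lambda>x. x < T)" using Sb_uminus[OF h1] by simp
  have h2': "D b c - D a b \<in> Sb n \<beta> \<alpha> (\<lambda>x. x < T)" using Sb_uminus[OF h2] by simp
  have h3': "D b c - D a c \<in> Sb n \<beta> \<alpha> (\<lambda>x. x < T)" using Sb_uminus[OF h3] by simp
  have core: "D j k - D j' k' \<in> Sb n \<beta> \<alpha> (\<lambda>x. x < T)"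
    using assms(8-10) h1 h2 h3 h1' h2' h3' by auto
  have Tsplit: "T = e (i, th p q) + fk i p q" if "(p,q) \<in> {(a,b),(a,c),(b,c)}" for p q
    using that unfolding T_def fk_def by (auto simp: thv add_ac)
  have cov: "lk M (i,x) \<ge> 1" if "x \<in> {a,b,c}" for x
  proof -
    have "x \<in> {j,k} \<or> x \<in> {j',k'}" using that assms(8-10) by auto
    then show ?thesis using lk_fk[of u i j k] lk_fk[of u' i j' k'] assms(11,12) by auto
  qed
  have "lk T v \<le> lk M v" for v
  proof -
    have "lk T v = (if v = (i,a) then 1 else 0) + (if v = (i,b) then 1 else 0) + (if v = (i,c) then 1 else 0)"
      unfolding T_def by (simp add: lookup_add lookup_single_when eq_commute)
    then show ?thesis using cov assms(2-4) by auto
  qed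
  then have MT: "M = (M - T) + T" by (rule le_split)
  define w where "w = M - T"
  have Mm: "M \<in> monomials n" using assms(6,8,11) fk_mono_mon[of u n i j k] assms(1-5)
    unfolding tri_def by auto
  have wm: "w \<in> monomials n" unfolding w_def using Mm by (rule monomials_diff)
  have urep: "Poly_Mapping.single v 1 * gen_elt \<beta> \<alpha> i p q = Poly_Mapping.single w 1 * D p q"
    if "(p,q) \<in> {(a,b),(a,c),(b,c)}" "v + fk i p q = M" for v p q
  proof -
    have "v + fk i p q = (w + e (i, th p q)) + fk i p q"
      using that MT Tsplit[OF that(1)] unfolding w_def by (simp add: add.assoc)
    then have "v = w + e (i, th p q)" by simp
    then show ?thesis unfolding D_def by (simp add: mult_single mult.assoc[symmetric])
  qed
  have "Poly_Mapping.single u 1 * gen_elt \<beta> \<alpha> i j k - Poly_Mapping.single u' 1 * gen_elt \<beta> \<alpha> i j' k'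
     = Poly_Mapping.single w 1 * (D j k - D j' k')"
    using urep[OF assms(8,11)] urep[OF assms(9,12)] by (simp add: right_diff_distrib)
  moreover have "Poly_Mapping.single w 1 * (D j k - D j' k') \<in> Sb n \<beta> \<alpha> (\<lambda>x. x < M)"
    using core wm by (rule Sb_mult) (metis MT add_strict_left_mono w_def)
  ultimately show ?thesis by simp
qed

subsection \<open>Disjoint forks\<close>

lemma Rexp: "gen_elt \<beta> \<alpha> i j k + Poly_Mapping.single (fk i j k) 1 =
   Poly_Mapping.single (e (i,j) + e (j,k)) 1 - Poly_Mapping.single (e (i,k) + e (j,k)) 1
   - Poly_Mapping.single (e (i,k)) \<beta> - Poly_Mapping.single 0 \<alpha>"
  unfolding gen_expand by (simp add: algebra_simps)

lemma keys_diff4: "Poly_Mapping.keys (a - b - c - d) \<subseteq>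
   Poly_Mapping.keys a \<union> Poly_Mapping.keys b \<union> Poly_Mapping.keys c \<union> Poly_Mapping.keys (d::'a \<Rightarrow>\<^sub>0 'b::ab_group_add)"
  using keys_diff[of "a-b-c" d] keys_diff[of "a-b" c] keys_diff[of a b] by blast

lemma keysR:
  assumes "i < j" "j < k" "x \<in> Poly_Mapping.keys (gen_elt \<beta> \<alpha> i j k + Poly_Mapping.single (fk i j k) 1)"
  shows "x < fk i j k"
proof -
  have "x \<in> {e (i,j) + e (j,k), e (i,k) + e (j,k), e (i,k), 0}"
    using subsetD[OF keys_diff4 assms(3)[unfolded Rexp]] by (auto split: if_splits)
  then show ?thesis using mon_A[OF assms(1,2)] mon_B[OF assms(1,2)] mon_C[OF assms(1,2)] mon_0[OF assms(1,2)]
    by auto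
qed

lemma R_X: "tri n i j k \<Longrightarrow> gen_elt \<beta> \<alpha> i j k + Poly_Mapping.single (fk i j k) 1 \<in> Xring n"
  unfolding Rexp using tri_mons[of n i j k] monomials_0
  by (intro Xring_add Xring_uminus Xring_single | simp only: diff_conv_add_uminus)+

lemma ring_aux: "(s * (r' - g')) * g - (s * (r - g)) * g' = (s * r') * g - (s * r) * (g'::'a::comm_ring)"
  by (simp add: algebra_simps)

lemma disjoint:
  fixes \<beta> \<alpha> :: "'k::comm_ring_1"
  assumes "u \<in> monomials n" "u' \<in> monomials n" "tri n i j k" "tri n i' j' k'"
    "u + fk i j k = M" "u' + fk i' j' k' = M"
    "(i,j) \<noteq> (i',j')" "(i,j) \<noteq> (i',k')" "(i,k) \<noteq> (i',j')" "(i,k) \<noteq> (i',k')"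
  shows "Poly_Mapping.single u 1 * gen_elt \<beta> \<alpha> i j k - Poly_Mapping.single u' 1 * gen_elt \<beta> \<alpha> i' j' k'
     \<in> Sb n \<beta> \<alpha> (\<lambda>x. x < M)"
proof -
  define f where "f = fk i j k"
  define f' where "f' = fk i' j' k'"
  define G where "G = gen_elt \<beta> \<alpha> i j k"
  define G' where "G' = gen_elt \<beta> \<alpha> i' j' k'"
  define R where "R = G + Poly_Mapping.single f 1"
  define R' where "R' = G' + Poly_Mapping.single f' 1"
  have ijk: "i < j" "j < k" "i' < j'" "j' < k'" using assms(3,4) unfolding tri_def by auto
  have z: "lk f v = 0 \<or> lk f' v = 0" for v
    using assms(7-10) unfolding f_def f'_def fk_def by (auto simp: lookup_add lookup_single_when)
  have "lk (f + f') v \<le> lk M v" for v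
  proof -
    have "lk M v = lk u v + lk f v"
      using arg_cong[where f="\<lambda>m. lk m v", OF assms(5)] by (simp add: lookup_add f_def)
    moreover have "lk M v = lk u' v + lk f' v"
      using arg_cong[where f="\<lambda>m. lk m v", OF assms(6)] by (simp add: lookup_add f'_def)
    ultimately show ?thesis using z[of v] by (auto simp: lookup_add)
  qed
  then have MT: "M = (M - (f + f')) + (f + f')" by (rule le_split)
  define w where "w = M - (f + f')"
  have MW: "M = w + (f + f')" using MT unfolding w_def[symmetric] .
  have Mm: "M \<in> monomials n" using assms(1,3,5) fk_mono_mon by blast
  have wm: "w \<in> monomials n" unfolding w_def using Mm by (rule monomials_diff)
  have "u + f = (w + f') + f" using assms(5) MT unfolding f_def w_def by (simp add: add_ac)
  then have u: "u = w + f'" by simp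
  have "u' + f' = (w + f) + f'" using assms(6) MT unfolding f'_def w_def by (simp add: add_ac)
  then have u': "u' = w + f" by simp
  have "Poly_Mapping.single u 1 * G - Poly_Mapping.single u' 1 * G'
      = (Poly_Mapping.single w 1 * (R' - G')) * G - (Poly_Mapping.single w 1 * (R - G)) * G'"
    unfolding u u' R_def R'_def by (simp add: mult_single)
  also have "\<dots> = (Poly_Mapping.single w 1 * R') * G - (Poly_Mapping.single w 1 * R) * G'"
    by (rule ring_aux)
  finally have eq: "Poly_Mapping.single u 1 * G - Poly_Mapping.single u' 1 * G'
      = (Poly_Mapping.single w 1 * R') * G - (Poly_Mapping.single w 1 * R) * G'" .
  have keysw: "x \<in> Poly_Mapping.keys (Poly_Mapping.single w 1 * q) \<Longrightarrow> \<exists>y\<in>Poly_Mapping.keys q. x = w + y"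
    for x and q :: "'k mpoly"
    using keys_mult[of "Poly_Mapping.single w 1" q] by (auto split: if_splits)
  have A: "(Poly_Mapping.single w 1 * R') * G \<in> Sb n \<beta> \<alpha> (\<lambda>x. x < M)"
    unfolding G_def
  proof (rule Sb_polyG[OF Xring_mult[OF Xring_single[OF wm]] assms(3)])
    show "R' \<in> Xring n" unfolding R'_def G'_def f'_def by (rule R_X[OF assms(4)])
    fix x assume "x \<in> Poly_Mapping.keys (Poly_Mapping.single w 1 * R')"
    then obtain y where y: "y \<in> Poly_Mapping.keys R'" "x = w + y" using keysw by blast
    have "y < f'" using keysR[OF ijk(3,4)] y(1) unfolding R'_def G'_def f'_def by blast
    then have "w + y + f < w + f' + f" by (simp add: add_strict_right_mono add_strict_left_mono)
    moreover have "w + f' + f = M" "x + fk i j k = w + y + f" using MW y(2) unfolding f_def by (simp_all add: add_ac)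
    ultimately show "x + fk i j k < M" by simp
  qed
  have B: "(Poly_Mapping.single w 1 * R) * G' \<in> Sb n \<beta> \<alpha> (\<lambda>x. x < M)"
    unfolding G'_def
  proof (rule Sb_polyG[OF Xring_mult[OF Xring_single[OF wm]] assms(4)])
    show "R \<in> Xring n" unfolding R_def G_def f_def by (rule R_X[OF assms(3)])
    fix x assume "x \<in> Poly_Mapping.keys (Poly_Mapping.single w 1 * R)"
    then obtain y where y: "y \<in> Poly_Mapping.keys R" "x = w + y" using keysw by blast
    have "y < f" using keysR[OF ijk(1,2)] y(1) unfolding R_def G_def f_def by blast
    then have "w + y + f' < w + f + f'" by (simp add: add_strict_right_mono add_strict_left_mono)
    moreover have "w + f + f' = M" "x + fk i' j' k' = w + y + f'" using MW y(2) unfolding f'_def by (simp_all add: add_ac)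
    ultimately show "x + fk i' j' k' < M" by simp
  qed
  have "Poly_Mapping.single u 1 * G - Poly_Mapping.single u' 1 * G' \<in> Sb n \<beta> \<alpha> (\<lambda>x. x < M)"
    unfolding eq by (rule Sb_diff[OF A B])
  then show ?thesis unfolding G_def G'_def .
qed

lemma critical:
  fixes \<beta> \<alpha> :: "'k::comm_ring_1"
  assumes "u \<in> monomials n" "u' \<in> monomials n" "tri n i j k" "tri n i' j' k'"
    "u + fk i j k = M" "u' + fk i' j' k' = M"
  shows "Poly_Mapping.single u 1 * gen_elt \<beta> \<alpha> i j k - Poly_Mapping.single u' 1 * gen_elt \<beta> \<alpha> i' j' k'
     \<in> Sb n \<beta> \<alpha> (\<lambda>x. x < M)"
proof -
  have t: "1 \<le> i" "i < j" "j < k" "k \<le> n" "1 \<le> i'" "i' < j'" "j' < k'" "k' \<le> n"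
    using assms(3,4) unfolding tri_def by auto
  show ?thesis
  proof (cases "(i,j,k) = (i',j',k')")
    case True
    then have "u = u'" using assms(5,6) by auto
    then show ?thesis using True by (simp add: Sb.Sb0)
  next
    case ne: False
    show ?thesis
    proof (cases "(i,j) \<noteq> (i',j') \<and> (i,j) \<noteq> (i',k') \<and> (i,k) \<noteq> (i',j') \<and> (i,k) \<noteq> (i',k')")
      case True
      then show ?thesis using disjoint[OF assms] by blast
    next
      case False
      then have ii: "i' = i" and sh: "j = j' \<or> j = k' \<or> k = j' \<or> k = k'" by auto
      note ov = overlap[OF _ _ _ _ _ assms(1,2) _ _ _ assms(5) assms(6)[unfolded ii]]
      consider "j = j'" "k < k'" | "j = j'" "k' < k" | "k = k'" "j < j'" | "k = k'" "j' < j" | "j = k'" | "k = j'"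
        using sh ne ii by (metis linorder_neqE_nat)
      then show ?thesis
      proof cases
        case 1 then show ?thesis using ov[where a=j and b=k and c=k'] t ii by auto
      next
        case 2 then show ?thesis using ov[where a=j and b=k' and c=k] t ii by auto
      next
        case 3 then show ?thesis using ov[where a=j and b=j' and c=k] t ii by auto
      next
        case 4 then show ?thesis using ov[where a=j' and b=j and c=k] t ii by auto
      next
        case 5 then show ?thesis using ov[where a=j' and b=j and c=k] t ii by auto
      next
        case 6 then show ?thesis using ov[where a=j and b=k and c=k'] t ii by auto
      qed
    qed
  qed
qed

subsection \<open>Independence\<close>

lemma decomp:
  fixes \<beta> \<alpha> :: "'k::comm_ring_1"
  assumes u0: "u0 \<in> monomials n" "tri n i0 j0 k0" "u0 + fk i0 j0 k0 = M"
    and p: "p \<in> Sb n \<beta> \<alpha> (\<lambda>x. x \<le> M)"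
  shows "\<exists>c. p - Poly_Mapping.single u0 c * gen_elt \<beta> \<alpha> i0 j0 k0 \<in> Sb n \<beta> \<alpha> (\<lambda>x. x < M)"
  using p
proof (induction p rule: Sb.induct)
  case Sb0
  have "0 - Poly_Mapping.single u0 0 * gen_elt \<beta> \<alpha> i0 j0 k0 = 0" by simp
  then show ?case using Sb.Sb0 by metis
next
  case (SbS q u i j k d)
  let ?H = "gen_elt \<beta> \<alpha> i0 j0 k0"
  let ?G = "gen_elt \<beta> \<alpha> i j k"
  obtain c where c: "q - Poly_Mapping.single u0 c * ?H \<in> Sb n \<beta> \<alpha> (\<lambda>x. x < M)" using SbS.IH by blast
  show ?case
  proof (cases "u + fk i j k < M")
    case True
    have "(q - Poly_Mapping.single u0 c * ?H) + Poly_Mapping.single u d * ?G \<in> Sb n \<beta> \<alpha> (\<lambda>x. x < M)"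
      using Sb.SbS[OF c SbS.hyps(2,3)] True by blast
    then have "q + Poly_Mapping.single u d * ?G - Poly_Mapping.single u0 c * ?H \<in> Sb n \<beta> \<alpha> (\<lambda>x. x < M)"
      by (simp add: algebra_simps)
    then show ?thesis by blast
  next
    case False
    then have eq: "u + fk i j k = M" using SbS.hyps(4) by simp
    have "Poly_Mapping.single u 1 * ?G - Poly_Mapping.single u0 1 * ?H \<in> Sb n \<beta> \<alpha> (\<lambda>x. x < M)"
      by (rule critical[OF SbS.hyps(2) u0(1) SbS.hyps(3) u0(2) eq u0(3)])
    then have "Poly_Mapping.single 0 d * (Poly_Mapping.single u 1 * ?G - Poly_Mapping.single u0 1 * ?H) \<in> Sb n \<beta> \<alpha> (\<lambda>x. x < M)"
      by (rule Sb_mult) (simp_all add: monomials_0)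
    then have "Poly_Mapping.single u d * ?G - Poly_Mapping.single u0 d * ?H \<in> Sb n \<beta> \<alpha> (\<lambda>x. x < M)"
      by (simp add: right_diff_distrib mult_single mult.assoc[symmetric])
    from Sb_add[OF c this]
    have "q + Poly_Mapping.single u d * ?G - Poly_Mapping.single u0 (c + d) * ?H \<in> Sb n \<beta> \<alpha> (\<lambda>x. x < M)"
      by (simp add: single_add algebra_simps)
    then show ?thesis by blast
  qed
qed

lemma no_decomp:
  assumes "\<not> (\<exists>u i j k. u \<in> monomials n \<and> tri n i j k \<and> u + fk i j k = M)"
    and "p \<in> Sb n \<beta> \<alpha> (\<lambda>x. x \<le> M)"
  shows "p \<in> Sb n \<beta> \<alpha> (\<lambda>x. x < M)"
  using assms(2)
proof (induction p rule: Sb.induct)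
  case Sb0 then show ?case by (rule Sb.Sb0)
next
  case (SbS q u i j k c)
  then have "u + fk i j k < M" using assms(1) by force
  then show ?case using Sb.SbS[OF SbS.IH SbS.hyps(2,3)] by blast
qed

lemma indep:
  fixes \<beta> \<alpha> :: "'k::comm_ring_1"
  shows "M \<in> monomials n \<Longrightarrow> p \<in> Sb n \<beta> \<alpha> (\<lambda>x. x \<le> M) \<Longrightarrow> (\<forall>m\<in>Poly_Mapping.keys p. forkless n m) \<Longrightarrow> p = 0"
proof (induction M arbitrary: p rule: wf_induct[OF wf_mon[of n]])
  case (1 M)
  have lt: "p \<in> Sb n \<beta> \<alpha> (\<lambda>x. x < M)"
  proof (cases "\<exists>u i j k. u \<in> monomials n \<and> tri n i j k \<and> u + fk i j k = M")
    case False
    then show ?thesis using no_decomp 1(3) by blast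
  next
    case True
    then obtain u0 i0 j0 k0 where u0: "u0 \<in> monomials n" "tri n i0 j0 k0" "u0 + fk i0 j0 k0 = M" by blast
    obtain c where c: "p - Poly_Mapping.single u0 c * gen_elt \<beta> \<alpha> i0 j0 k0 \<in> Sb n \<beta> \<alpha> (\<lambda>x. x < M)"
      using decomp[OF u0 1(3)] by blast
    have ijk: "i0 < j0" "j0 < k0" using u0(2) unfolding tri_def by auto
    have "lk (p - Poly_Mapping.single u0 c * gen_elt \<beta> \<alpha> i0 j0 k0) M = 0" using c by (rule Sb_lt_lookup)
    then have lp: "lk p M = - c" using lookupG[OF ijk, of u0 c \<beta> \<alpha>] u0(3) by (simp add: lookup_minus)
    have "c = 0"
    proof (rule ccontr)
      assume "c \<noteq> 0"
      then have "M \<in> Poly_Mapping.keys p" using lp by (simp add: in_keys_iff)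
      then have "forkless n M" using 1(4) by blast
      moreover have "lk M (i0,j0) \<noteq> 0" "lk M (i0,k0) \<noteq> 0" using lk_fk[of u0 i0 j0 k0] u0(3) by auto
      ultimately show False using u0(2) unfolding forkless_def tri_def by blast
    qed
    then show ?thesis using c by simp
  qed
  from Sb_bound[OF lt] show ?case
  proof
    assume "p \<in> Sb n \<beta> \<alpha> (\<lambda>x. False)"
    then show ?thesis by (rule Sb_False)
  next
    assume "\<exists>M'\<in>monomials n. M' < M \<and> p \<in> Sb n \<beta> \<alpha> (\<lambda>x. x \<le> M')"
    then obtain M' where "M' \<in> monomials n" "M' < M" "p \<in> Sb n \<beta> \<alpha> (\<lambda>x. x \<le> M')" by blast
    then show ?thesis using 1(1)[rule_format, of M' p] 1(2) 1(4) by blast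
  qed
qed

lemma J_Sb: "p \<in> Jideal n \<beta> \<alpha> \<Longrightarrow> p \<in> Sb n \<beta> \<alpha> (\<lambda>x. True)"
  unfolding Jideal_def
proof (induction p rule: ideal_in.induct)
  case zero then show ?case by (rule Sb.Sb0)
next
  case (step p q g)
  then obtain i j k where g: "g = gen_elt \<beta> \<alpha> i j k" "tri n i j k" unfolding Jgens_def tri_def by blast
  have "q * g \<in> Sb n \<beta> \<alpha> (\<lambda>x. True)" unfolding g(1) using step(2) g(2) by (rule Sb_polyG) simp
  then show ?case using step(4) by (rule Sb_add[rotated])
qed

lemma independence:
  fixes \<beta> \<alpha> :: "'k::comm_ring_1"
  assumes "\<forall>m\<in>Poly_Mapping.keys q. forkless n m" "q \<in> Jideal n \<beta> \<alpha>"
  shows "q = 0"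
  using Sb_bound[OF J_Sb[OF assms(2)]]
proof
  assume "q \<in> Sb n \<beta> \<alpha> (\<lambda>x. False)" then show ?thesis by (rule Sb_False)
next
  assume "\<exists>M\<in>monomials n. True \<and> q \<in> Sb n \<beta> \<alpha> (\<lambda>x. x \<le> M)"
  then show ?thesis using indep assms(1) by blast
qed

subsection \<open>Spanning\<close>

lemma J_add: assumes "p \<in> Jideal n \<beta> \<alpha>" "q \<in> Jideal n \<beta> \<alpha>" shows "p + q \<in> Jideal n \<beta> \<alpha>"
  using assms(2) unfolding Jideal_def
proof (induction q rule: ideal_in.induct)
  case zero then show ?case using assms(1) unfolding Jideal_def by simp
next
  case (step q r g)
  then show ?case using ideal_in.step[of "p + q"] by (simp add: add.assoc)
qed

lemma J_uminus: assumes "p \<in> Jideal n \<beta> \<alpha>" shows "- p \<in> Jideal n \<beta> \<alpha>"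
  using assms unfolding Jideal_def
proof (induction p rule: ideal_in.induct)
  case zero then show ?case by (simp add: ideal_in.zero)
next
  case (step q r g)
  have "- (q + r * g) = - q + (- r) * g" by simp
  then show ?case using ideal_in.step[OF step.IH Xring_uminus[OF step.hyps(2)] step.hyps(3)] by metis
qed

lemma J_diff: "p \<in> Jideal n \<beta> \<alpha> \<Longrightarrow> q \<in> Jideal n \<beta> \<alpha> \<Longrightarrow> p - q \<in> Jideal n \<beta> \<alpha>"
  using J_add[OF _ J_uminus] by (metis diff_conv_add_uminus)

lemma J_zero: "0 \<in> Jideal n \<beta> \<alpha>"
  unfolding Jideal_def by (rule ideal_in.zero)

lemma J_term:
  assumes "u \<in> monomials n" "tri n i j k"
  shows "Poly_Mapping.single u c * gen_elt \<beta> \<alpha> i j k \<in> Jideal n \<beta> \<alpha>"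
proof -
  have "gen_elt \<beta> \<alpha> i j k \<in> Jgens n \<beta> \<alpha>" using assms(2) unfolding Jgens_def tri_def by blast
  then have "0 + Poly_Mapping.single u c * gen_elt \<beta> \<alpha> i j k \<in> ideal_in (Xring n) (Jgens n \<beta> \<alpha>)"
    by (rule ideal_in.step[OF ideal_in.zero Xring_single[OF assms(1)]])
  then show ?thesis unfolding Jideal_def by simp
qed

lemma group_aux: "(A - B - C - D) - X - (q1 - q2 - q3 - q4) =
   (A - q1) - (B - q2) - (C - q3) - (D - q4) - (X::'a::ab_group_add)"
  by (simp add: algebra_simps)

lemma span_mon:
  fixes \<beta> \<alpha> :: "'k::comm_ring_1"
  shows "m \<in> monomials n \<Longrightarrow> \<exists>q. (\<forall>x\<in>Poly_Mapping.keys q. forkless n x) \<and> Poly_Mapping.single m c - q \<in> Jideal n \<beta> \<alpha>"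
proof (induction m arbitrary: c rule: wf_induct[OF wf_mon[of n]])
  case (1 m)
  show ?case
  proof (cases "forkless n m")
    case True
    then show ?thesis using J_zero by (intro exI[of _ "Poly_Mapping.single m c"]) auto
  next
    case False
    then obtain i j k where t: "tri n i j k" and nz: "lk m (i,j) \<noteq> 0" "lk m (i,k) \<noteq> 0"
      using 1(2) unfolding forkless_def tri_def by blast
    have ijk: "i < j" "j < k" using t unfolding tri_def by auto
    have "lk (fk i j k) v \<le> lk m v" for v
      using nz ijk unfolding fk_def by (auto simp: lookup_add lookup_single_when)
    then have mu: "m = (m - fk i j k) + fk i j k" by (rule le_split)
    define u where "u = m - fk i j k"
    have um: "u \<in> monomials n" unfolding u_def using 1(2) by (rule monomials_diff)
    have mu': "m = u + fk i j k" using mu unfolding u_def .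
    have mA: "u + (e (i,j) + e (j,k)) \<in> monomials n" "u + (e (i,k) + e (j,k)) \<in> monomials n"
      "u + e (i,k) \<in> monomials n" using um tri_mons[OF t] monomials_add by blast+
    have lA: "(u + (e (i,j) + e (j,k)), m) \<in> {(x, y). x < y \<and> x \<in> monomials n \<and> y \<in> monomials n}"
      "(u + (e (i,k) + e (j,k)), m) \<in> {(x, y). x < y \<and> x \<in> monomials n \<and> y \<in> monomials n}"
      "(u + e (i,k), m) \<in> {(x, y). x < y \<and> x \<in> monomials n \<and> y \<in> monomials n}"
      "(u, m) \<in> {(x, y). x < y \<and> x \<in> monomials n \<and> y \<in> monomials n}"
      using fk_lt[OF ijk, of u] mA um 1(2) unfolding mu'[symmetric] by auto
    obtain q1 where q1: "\<forall>x\<in>Poly_Mapping.keys q1. forkless n x" "Poly_Mapping.single (u + (e (i,j) + e (j,k))) c - q1 \<in> Jideal n \<beta> \<alpha>"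
      using 1(1)[rule_format, OF lA(1) mA(1)] by blast
    obtain q2 where q2: "\<forall>x\<in>Poly_Mapping.keys q2. forkless n x" "Poly_Mapping.single (u + (e (i,k) + e (j,k))) c - q2 \<in> Jideal n \<beta> \<alpha>"
      using 1(1)[rule_format, OF lA(2) mA(2)] by blast
    obtain q3 where q3: "\<forall>x\<in>Poly_Mapping.keys q3. forkless n x" "Poly_Mapping.single (u + e (i,k)) (c * \<beta>) - q3 \<in> Jideal n \<beta> \<alpha>"
      using 1(1)[rule_format, OF lA(3) mA(3)] by blast
    obtain q4 where q4: "\<forall>x\<in>Poly_Mapping.keys q4. forkless n x" "Poly_Mapping.single u (c * \<alpha>) - q4 \<in> Jideal n \<beta> \<alpha>"
      using 1(1)[rule_format, OF lA(4) um] by blast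
    have kq: "\<forall>x\<in>Poly_Mapping.keys (q1 - q2 - q3 - q4). forkless n x"
      using keys_diff4[of q1 q2 q3 q4] q1(1) q2(1) q3(1) q4(1) by blast
    have "Poly_Mapping.single u c * (gen_elt \<beta> \<alpha> i j k + Poly_Mapping.single (fk i j k) 1)
       = Poly_Mapping.single (u + (e (i,j) + e (j,k))) c - Poly_Mapping.single (u + (e (i,k) + e (j,k))) c
         - Poly_Mapping.single (u + e (i,k)) (c * \<beta>) - Poly_Mapping.single u (c * \<alpha>)"
      unfolding Rexp by (simp add: right_diff_distrib mult_single)
    then have "Poly_Mapping.single u c * gen_elt \<beta> \<alpha> i j k + Poly_Mapping.single m c
       = Poly_Mapping.single (u + (e (i,j) + e (j,k))) c - Poly_Mapping.single (u + (e (i,k) + e (j,k))) c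
         - Poly_Mapping.single (u + e (i,k)) (c * \<beta>) - Poly_Mapping.single u (c * \<alpha>)"
      unfolding mu' by (simp only: distrib_left mult_single mult_1_right)
    then have sm: "Poly_Mapping.single m c
       = Poly_Mapping.single (u + (e (i,j) + e (j,k))) c - Poly_Mapping.single (u + (e (i,k) + e (j,k))) c
         - Poly_Mapping.single (u + e (i,k)) (c * \<beta>) - Poly_Mapping.single u (c * \<alpha>)
         - Poly_Mapping.single u c * gen_elt \<beta> \<alpha> i j k"
      by (metis add_diff_cancel_left')
    have eq: "Poly_Mapping.single m c - (q1 - q2 - q3 - q4) =
        (Poly_Mapping.single (u + (e (i,j) + e (j,k))) c - q1) - (Poly_Mapping.single (u + (e (i,k) + e (j,k))) c - q2)
      - (Poly_Mapping.single (u + e (i,k)) (c * \<beta>) - q3) - (Poly_Mapping.single u (c * \<alpha>) - q4)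
      - Poly_Mapping.single u c * gen_elt \<beta> \<alpha> i j k"
      unfolding sm by (rule group_aux)
    have "Poly_Mapping.single m c - (q1 - q2 - q3 - q4) \<in> Jideal n \<beta> \<alpha>"
      unfolding eq by (intro J_diff q1(2) q2(2) q3(2) q4(2) J_term[OF um t])
    then show ?thesis using kq by blast
  qed
qed

lemma spanning:
  fixes \<beta> \<alpha> :: "'k::comm_ring_1"
  assumes "p \<in> Xring n"
  shows "\<exists>q. (\<forall>m\<in>Poly_Mapping.keys q. forkless n m) \<and> p - q \<in> Jideal n \<beta> \<alpha>"
proof -
  have "finite S \<Longrightarrow> S \<subseteq> Poly_Mapping.keys p \<Longrightarrow>
     \<exists>q. (\<forall>m\<in>Poly_Mapping.keys q. forkless n m) \<and> (\<Sum>m\<in>S. Poly_Mapping.single m (lk p m)) - q \<in> Jideal n \<beta> \<alpha>" for S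
  proof (induction S rule: finite_induct)
    case empty then show ?case using J_zero by (intro exI[of _ 0]) simp
  next
    case (insert x F)
    obtain q where q: "\<forall>m\<in>Poly_Mapping.keys q. forkless n m" "(\<Sum>m\<in>F. Poly_Mapping.single m (lk p m)) - q \<in> Jideal n \<beta> \<alpha>"
      using insert by auto
    have "x \<in> monomials n" using insert(4) assms unfolding Xring_def by blast
    then obtain q' where q': "\<forall>m\<in>Poly_Mapping.keys q'. forkless n m" "Poly_Mapping.single x (lk p x) - q' \<in> Jideal n \<beta> \<alpha>"
      using span_mon by blast
    have k: "\<forall>m\<in>Poly_Mapping.keys (q' + q). forkless n m" using keys_add[of q' q] q(1) q'(1) by blast
    have "(\<Sum>m\<in>insert x F. Poly_Mapping.single m (lk p m)) - (q' + q)
       = (Poly_Mapping.single x (lk p x) - q') + ((\<Sum>m\<in>F. Poly_Mapping.single m (lk p m)) - q)"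
      unfolding sum.insert[OF insert(1,2)] by (simp add: algebra_simps)
    then show ?case using J_add[OF q'(2) q(2)] k by metis
  qed
  then obtain q where "\<forall>m\<in>Poly_Mapping.keys q. forkless n m" "(\<Sum>m\<in>Poly_Mapping.keys p. Poly_Mapping.single m (lk p m)) - q \<in> Jideal n \<beta> \<alpha>"
    by (meson finite_keys order_refl)
  then show ?thesis using poly_expand[of p] by metis
qed

theorem proposition4p4:
  fixes \<beta> \<alpha> :: "'k::comm_ring_1" and n :: nat
  assumes "n \<ge> 1"
  shows "(\<forall>p \<in> Xring n. \<exists>q :: 'k mpoly. (\<forall>m\<in>Poly_Mapping.keys q. forkless n m) \<and> p - q \<in> Jideal n \<beta> \<alpha>)
       \<and> (\<forall>q :: 'k mpoly. (\<forall>m\<in>Poly_Mapping.keys q. forkless n m) \<and> q \<in> Jideal n \<beta> \<alpha> \<longrightarrow> q = 0)"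
  using spanning independence by blast

end
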